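(* Suppose $\|\mu_a\|_\infty,\|\widehat\mu_a\|_\infty\le B<\infty$ a.s. for all $a$, and $\mathbb{P}$ satisfies the margin condition with some $\kappa>0$, $\alpha>0$. Let $C^*\in\mathcal{C}_k^*$. Then for each $a\in\mathcal{A}$, $$\mathbb{P}\big|\Pi_{C^*,a}(\widehat\mu)-\Pi_{C^*,a}(\mu)\big|\lesssim\max_j\big\|\mathbb{1}\{\zeta_j(\widehat\mu;C^* )>0\}-\mathbb{1}\{\zeta_j(\mu;C^* )>0\}\big\|_\infty\sum_a\|\widehat\mu_a-\mu_a\|_{\mathbb{P},1}+\sum_a\|\widehat\mu_a-\mu_a\|_\infty^\alpha.$$
   Context: $Z=(Y,A,X)\sim\mathbb{P}$, $A\in\mathcal{A}=\{1,\dots,p\}$; $\mu_a(X)=\mathbb{E}(Y\mid X,A=a)$, $\mu=(\mu_1(X),\dots,\mu_p(X))^\top$, and $\widehat\mu$ an estimator of $\mu$ (held fixed under $\mathbb{P}$). Codebooks $C=\{c_1,\dots,c_k\}\subset\mathbb{R}^p$; $\mathcal{C}_k$ the codebooks of size $k$ in the image of $\mu$; $\Pi_C(x)=\arg\min_{c\in C}\|c-x\|_2^2$ and $\Pi_{C,a}(x)$ its $a$-th coordinate; $R(C)=\mathbb{E}\|\mu-\Pi_C(\mu)\|_2^2$; $\mathcal{C}_k^*$ its set of minimizers. $\zeta_j(\bar\mu;C)=\min_{i\ne j}\|\bar\mu-c_i\|_2-\|\bar\mu-c_j\|_2$. $V_j(C^* )=\{x:\|x-c_j^*\|_2\le\|x-c_i^*\|_2\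 \forall i\ne j\}$; $N_{C^*}(t)=\bigcup_j\{x\in V_j(C^* ):|\,\|x-c_j^*\|_2-\min_{i\ne j}\|x-c_i^*\|_2\,|\le t\}$; margin condition (radius $\kappa$, rate $\alpha$): for $0\le t\le\kappa$, $\sup_{C^*\in\mathcal{C}_k^*}\mathbb{P}(\mu\in N_{C^*}(t))\lesssim t^\alpha$. $\|f\|_{\mathbb{P},1}=\int|f|d\mathbb{P}$, $\|\cdot\|_\infty$ sup norm, $\lesssim$ inequality up to a multiplicative constant. *)

theory Defs
  imports "HOL-Probability.Probability"
begin

text \<open>Codebooks are indexed: C :: nat => real^'p, with centres C 0, ..., C (k-1).
  The coordinate index set A = {1..p} is the finite type 'p.\<close>

definition nearest_idx :: "(nat \<Rightarrow> 'a::metric_space) \<Rightarrow> nat \<Rightarrow> 'a \<Rightarrow> nat" where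
  "nearest_idx C k x = (LEAST j. j < k \<and> (\<forall>i<k. dist x (C j) \<le> dist x (C i)))"

definition proj :: "(nat \<Rightarrow> 'a::metric_space) \<Rightarrow> nat \<Rightarrow> 'a \<Rightarrow> 'a" where
  "proj C k x = C (nearest_idx C k x)"

definition zeta :: "(nat \<Rightarrow> 'a::metric_space) \<Rightarrow> nat \<Rightarrow> nat \<Rightarrow> 'a \<Rightarrow> real" where
  "zeta C k j x = Min {dist x (C i) | i. i < k \<and> i \<noteq> j} - dist x (C j)"

definition voronoi :: "(nat \<Rightarrow> 'a::metric_space) \<Rightarrow> nat \<Rightarrow> nat \<Rightarrow> 'a set" where
  "voronoi C k j = {x. \<forall>i<k. i \<noteq> j \<longrightarrow> dist x (C j) \<le> dist x (C i)}"

definition margin_nbhd :: "(nat \<Rightarrow> 'a::metric_space) \<Rightarrow> nat \<Rightarrow> real \<Rightarrow> 'a set" where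
  "margin_nbhd C k t = (\<Union>j<k. {x \<in> voronoi C k j.
      \<bar>dist x (C j) - Min {dist x (C i) | i. i < k \<and> i \<noteq> j}\<bar> \<le> t})"

definition risk :: "'w measure \<Rightarrow> ('w \<Rightarrow> 'a::real_normed_vector) \<Rightarrow> (nat \<Rightarrow> 'a) \<Rightarrow> nat \<Rightarrow> real" where
  "risk M mu C k = integral\<^sup>L M (\<lambda>\<omega>. (norm (mu \<omega> - proj C k (mu \<omega>)))\<^sup>2)"

definition codebook :: "'w measure \<Rightarrow> ('w \<Rightarrow> 'a) \<Rightarrow> nat \<Rightarrow> (nat \<Rightarrow> 'a) \<Rightarrow> bool" where
  "codebook M mu k C \<longleftrightarrow> inj_on C {..<k} \<and> C ` {..<k} \<subseteq> mu ` space M"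

definition optimal_codebook :: "'w measure \<Rightarrow> ('w \<Rightarrow> 'a::real_normed_vector) \<Rightarrow> nat \<Rightarrow> (nat \<Rightarrow> 'a) \<Rightarrow> bool" where
  "optimal_codebook M mu k C \<longleftrightarrow> codebook M mu k C \<and>
     (\<forall>C'. codebook M mu k C' \<longrightarrow> risk M mu C k \<le> risk M mu C' k)"

definition margin_condition :: "'w measure \<Rightarrow> ('w \<Rightarrow> 'a::real_normed_vector) \<Rightarrow> nat \<Rightarrow> real \<Rightarrow> real \<Rightarrow> bool" where
  "margin_condition M mu k \<kappa> \<alpha> \<longleftrightarrow> (\<exists>c0. \<forall>t. 0 \<le> t \<and> t \<le> \<kappa> \<longrightarrow>
      (\<forall>C. optimal_codebook M mu k C \<longrightarrow>
         measure M {\<omega> \<in> space M. mu \<omega> \<in> margin_nbhd C k t} \<le> c0 * t powr \<alpha>))"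

definition Linf :: "'w measure \<Rightarrow> ('w \<Rightarrow> real) \<Rightarrow> real" where
  "Linf M f = real_of_ereal (esssup M (\<lambda>\<omega>. ereal \<bar>f \<omega>\<bar>))"

definition L1 :: "'w measure \<Rightarrow> ('w \<Rightarrow> real) \<Rightarrow> real" where
  "L1 M f = integral\<^sup>L M (\<lambda>\<omega>. \<bar>f \<omega>\<bar>)"

end

theory Submission imports Defs begin

lemma nearest_prop:
  assumes "k \<ge> 1"
  shows "nearest_idx C k x < k \<and> (\<forall>i<k. dist x (C (nearest_idx C k x)) \<le> dist x (C i))"
proof -
  have fin: "finite ((\<lambda>i. dist x (C i)) ` {..<k})" "(\<lambda>i. dist x (C i)) ` {..<k} \<noteq> {}"
    using assms by (auto simp: lessThan_empty_iff)
  obtain j where j: "j < k" "dist x (C j) = Min ((\<lambda>i. dist x (C i)) ` {..<k})"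
    using Min_in[OF fin] by auto
  have "j < k \<and> (\<forall>i<k. dist x (C j) \<le> dist x (C i))"
    using j fin by auto
  then show ?thesis unfolding nearest_idx_def by (rule LeastI)
qed

lemma margin_mono: "t \<le> t' \<Longrightarrow> margin_nbhd C k t \<subseteq> margin_nbhd C k t'"
  unfolding margin_nbhd_def by auto

lemma in_margin:
  fixes C :: "nat \<Rightarrow> 'a::metric_space"
  assumes "k \<ge> 1" "proj C k x \<noteq> proj C k y"
  shows "x \<in> margin_nbhd C k (2 * dist x y)"
proof -
  define j where "j = nearest_idx C k x"
  define i where "i = nearest_idx C k y"
  have j: "j < k" "\<forall>l<k. dist x (C j) \<le> dist x (C l)" using nearest_prop[OF assms(1)] j_def by auto
  have i: "i < k" "\<forall>l<k. dist y (C i) \<le> dist y (C l)" using nearest_prop[OF assms(1)] i_def by auto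
  have ij: "i \<noteq> j" using assms(2) unfolding proj_def i_def j_def by auto
  define S where "S = {dist x (C l) | l. l < k \<and> l \<noteq> j}"
  have Seq: "S = (\<lambda>l. dist x (C l)) ` {l. l < k \<and> l \<noteq> j}" unfolding S_def by auto
  have finS: "finite S" unfolding Seq by auto
  have iS: "dist x (C i) \<in> S" unfolding S_def using i ij by auto
  have m1: "Min S \<le> dist x (C i)" using Min_le[OF finS iS] .
  have m2: "dist x (C j) \<le> Min S" using finS iS j unfolding S_def
    by (subst Min_ge_iff) auto
  have "dist x (C i) \<le> dist y (C i) + dist x y" by (metis dist_commute dist_triangle)
  also have "\<dots> \<le> dist y (C j) + dist x y" using i j by auto
  also have "\<dots> \<le> dist x (C j) + 2 * dist x y" by (smt (verit) dist_commute dist_triangle)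
  finally have "\<bar>dist x (C j) - Min S\<bar> \<le> 2 * dist x y" using m1 m2 by auto
  moreover have "x \<in> voronoi C k j" unfolding voronoi_def using j by auto
  ultimately show ?thesis unfolding margin_nbhd_def S_def using j by blast
qed

lemma margin_borel:
  fixes C :: "nat \<Rightarrow> 'a::{metric_space, second_countable_topology}"
  shows "margin_nbhd C k t \<in> sets borel"
proof -
  have eq: "margin_nbhd C k t = {x \<in> space borel. \<exists>j<k. (\<forall>i<k. i \<noteq> j \<longrightarrow> dist x (C j) \<le> dist x (C i)) \<and>
      \<bar>dist x (C j) - Min ((\<lambda>i. dist x (C i)) ` {i. i < k \<and> i \<noteq> j})\<bar> \<le> t}"
    unfolding margin_nbhd_def voronoi_def
    by (auto simp: setcompr_eq_image)
  show ?thesis unfolding eq by measurable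
qed

lemma Linf_AE:
  assumes "prob_space M" "f \<in> borel_measurable M" "AE x in M. \<bar>f x\<bar> \<le> c"
  shows "0 \<le> Linf M f \<and> (AE x in M. \<bar>f x\<bar> \<le> Linf M f)"
proof -
  interpret prob_space M by fact
  have m: "(\<lambda>x. ereal \<bar>f x\<bar>) \<in> borel_measurable M" using assms(2) by measurable
  have up: "esssup M (\<lambda>x. ereal \<bar>f x\<bar>) \<le> ereal c"
    using assms(3) by (intro esssup_I[OF m]) auto
  have "esssup M (\<lambda>x. ereal 0) \<le> esssup M (\<lambda>x. ereal \<bar>f x\<bar>)"
    by (rule esssup_mono) auto
  then have lo: "0 \<le> esssup M (\<lambda>x. ereal \<bar>f x\<bar>)"
    using esssup_const[of M "ereal 0"] emeasure_space_1 by (simp add: zero_ereal_def)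
  have eq: "ereal (Linf M f) = esssup M (\<lambda>x. ereal \<bar>f x\<bar>)"
    unfolding Linf_def using up lo by (cases "esssup M (\<lambda>x. ereal \<bar>f x\<bar>)") auto
  have "AE x in M. ereal \<bar>f x\<bar> \<le> ereal (Linf M f)" unfolding eq by (rule esssup_AE)
  then have "AE x in M. \<bar>f x\<bar> \<le> Linf M f" by simp
  moreover have "0 \<le> Linf M f" using lo unfolding eq[symmetric] by simp
  ultimately show ?thesis by simp
qed


lemma vnth_meas: "(f :: 'w \<Rightarrow> real^'p) \<in> borel_measurable M \<Longrightarrow> (\<lambda>x. f x $ i) \<in> borel_measurable M"
  by (rule borel_measurable_continuous_on[where f="\<lambda>x. x $ i"]) (auto intro: continuous_intros)

lemma Linf_nonneg:
  assumes "prob_space M"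
  shows "0 \<le> Linf M f"
proof -
  interpret prob_space M by fact
  have "esssup M (\<lambda>x. ereal 0) \<le> esssup M (\<lambda>x. ereal \<bar>f x\<bar>)"
    by (rule esssup_mono) auto
  then have "0 \<le> esssup M (\<lambda>x. ereal \<bar>f x\<bar>)"
    using esssup_const[of M "ereal 0"] emeasure_space_1 by (simp add: zero_ereal_def)
  then show ?thesis unfolding Linf_def by (rule real_of_ereal_pos)
qed

theorem lemmaA2:
  fixes M :: "'w measure" and mu :: "'w \<Rightarrow> real^'p" and B \<kappa> \<alpha> :: real
    and k :: nat and Cs :: "nat \<Rightarrow> real^'p"
  assumes "prob_space M"
    and "mu \<in> borel_measurable M"
    and "k \<ge> 1"
    and "AE \<omega> in M. \<forall>a. \<bar>mu \<omega> $ a\<bar> \<le> B"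
    and "\<kappa> > 0" and "\<alpha> > 0"
    and "margin_condition M mu k \<kappa> \<alpha>"
    and "optimal_codebook M mu k Cs"
  shows "\<exists>K. \<forall>muhat. muhat \<in> borel_measurable M \<and> (AE \<omega> in M. \<forall>a. \<bar>muhat \<omega> $ a\<bar> \<le> B) \<longrightarrow>
     (\<forall>a. integral\<^sup>L M (\<lambda>\<omega>. \<bar>proj Cs k (muhat \<omega>) $ a - proj Cs k (mu \<omega>) $ a\<bar>)
        \<le> K * (Max ((\<lambda>j. Linf M (\<lambda>\<omega>. of_bool (0 < zeta Cs k j (muhat \<omega>))
                                    - of_bool (0 < zeta Cs k j (mu \<omega>)))) ` {..<k})
               * (\<Sum>a'\<in>UNIV. L1 M (\<lambda>\<omega>. muhat \<omega> $ a' - mu \<omega> $ a'))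
             + (\<Sum>a'\<in>UNIV. (Linf M (\<lambda>\<omega>. muhat \<omega> $ a' - mu \<omega> $ a')) powr \<alpha>)))"
proof -
  interpret prob_space M by fact
  obtain c0 where c0: "\<And>t. 0 \<le> t \<Longrightarrow> t \<le> \<kappa> \<Longrightarrow>
      measure M {\<omega> \<in> space M. mu \<omega> \<in> margin_nbhd Cs k t} \<le> c0 * t powr \<alpha>"
    using assms(7,8) unfolding margin_condition_def by blast
  have "measure M {\<omega> \<in> space M. mu \<omega> \<in> margin_nbhd Cs k \<kappa>} \<le> c0 * \<kappa> powr \<alpha>"
    using c0[of \<kappa>] assms(5) by simp
  then have "0 \<le> c0 * \<kappa> powr \<alpha>" by (meson measure_nonneg order_trans)
  moreover have "\<kappa> powr \<alpha> > 0" using assms(5) by simp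
  ultimately have c0pos: "0 \<le> c0" by (simp add: zero_le_mult_iff)
  define P where "P = real CARD('p)"
  have Ppos: "P \<ge> 1" unfolding P_def by simp
  define D where "D = (\<Sum>a\<in>UNIV. \<Sum>i<k. \<Sum>j<k. \<bar>Cs i $ a - Cs j $ a\<bar>)"
  have Dpos: "0 \<le> D" unfolding D_def by (intro sum_nonneg) auto
  define K where "K = D * (c0 * (2*P) powr \<alpha> + (2*P/\<kappa>) powr \<alpha>)"
  have Kpos: "0 \<le> K" unfolding K_def using Dpos c0pos by (intro mult_nonneg_nonneg add_nonneg_nonneg) auto
  have projD: "\<bar>proj Cs k x $ a - proj Cs k y $ a\<bar> \<le> D" for x y a
  proof -
    have i: "nearest_idx Cs k x < k" "nearest_idx Cs k y < k" using nearest_prop[OF assms(3)] by auto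
    have "\<bar>proj Cs k x $ a - proj Cs k y $ a\<bar> \<le> (\<Sum>j<k. \<bar>Cs (nearest_idx Cs k x) $ a - Cs j $ a\<bar>)"
      unfolding proj_def using i by (intro member_le_sum[where f="\<lambda>j. \<bar>Cs (nearest_idx Cs k x) $ a - Cs j $ a\<bar>"]) auto
    also have "\<dots> \<le> (\<Sum>i<k. \<Sum>j<k. \<bar>Cs i $ a - Cs j $ a\<bar>)"
      using i by (intro member_le_sum[where f="\<lambda>i. \<Sum>j<k. \<bar>Cs i $ a - Cs j $ a\<bar>"]) (auto intro: sum_nonneg)
    also have "\<dots> \<le> D" unfolding D_def
      by (intro member_le_sum[where f="\<lambda>a. \<Sum>i<k. \<Sum>j<k. \<bar>Cs i $ a - Cs j $ a\<bar>"]) (auto intro: sum_nonneg)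
    finally show ?thesis .
  qed
  show ?thesis
  proof (intro exI[of _ K] allI impI)
    fix muhat :: "'w \<Rightarrow> real^'p" and a
    assume mh: "muhat \<in> borel_measurable M \<and> (AE \<omega> in M. \<forall>a. \<bar>muhat \<omega> $ a\<bar> \<le> B)"
    define L where "L a' = Linf M (\<lambda>\<omega>. muhat \<omega> $ a' - mu \<omega> $ a')" for a'
    have Lfacts: "0 \<le> L a' \<and> (AE \<omega> in M. \<bar>muhat \<omega> $ a' - mu \<omega> $ a'\<bar> \<le> L a')" for a'
    proof -
      have m: "(\<lambda>\<omega>. muhat \<omega> $ a' - mu \<omega> $ a') \<in> borel_measurable M"
        using mh assms(2) by (intro borel_measurable_diff vnth_meas) auto
      have "AE \<omega> in M. \<bar>muhat \<omega> $ a' - mu \<omega> $ a'\<bar> \<le> 2 * B"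
        using conjunct2[OF mh] assms(4)
      proof eventually_elim
        case (elim \<omega>)
        then have "\<bar>muhat \<omega> $ a'\<bar> \<le> B" "\<bar>mu \<omega> $ a'\<bar> \<le> B" by auto
        then show ?case by linarith
      qed
      then show ?thesis unfolding L_def using Linf_AE[OF assms(1) m] by blast
    qed
    have Lpos: "\<And>a'. 0 \<le> L a'" using Lfacts by blast
    have AEL: "AE \<omega> in M. \<forall>a'\<in>UNIV. \<bar>muhat \<omega> $ a' - mu \<omega> $ a'\<bar> \<le> L a'"
      by (rule AE_finite_allI) (use Lfacts in auto)
    define Mx where "Mx = Max (range L)"
    have Mxin: "Mx \<in> range L" unfolding Mx_def by (intro Max_in) auto
    have LMx: "L a' \<le> Mx" for a' unfolding Mx_def by (intro Max_ge) auto
    have Mxpos: "0 \<le> Mx" using LMx[of a] Lpos[of a] by linarith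
    have sumL: "(\<Sum>a'\<in>UNIV. L a') \<le> P * Mx"
      using sum_mono[of UNIV L "\<lambda>_. Mx"] LMx unfolding P_def by auto
    have SLa: "0 \<le> (\<Sum>a'\<in>UNIV. L a' powr \<alpha>)" by (intro sum_nonneg) auto
    have MxSL: "Mx powr \<alpha> \<le> (\<Sum>a'\<in>UNIV. L a' powr \<alpha>)"
      using Mxin by (auto intro!: member_le_sum)
    define T where "T = 2 * (\<Sum>a'\<in>UNIV. L a')"
    have Tpos: "0 \<le> T" unfolding T_def using Lpos by (auto intro: sum_nonneg)
    define S where "S = {\<omega> \<in> space M. mu \<omega> \<in> margin_nbhd Cs k T}"
    have Sm: "S \<in> sets M"
    proof -
      have "S = mu -` margin_nbhd Cs k T \<inter> space M" unfolding S_def by auto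
      then show ?thesis using measurable_sets[OF assms(2) margin_borel] by simp
    qed
    define g where "g \<omega> = \<bar>proj Cs k (muhat \<omega>) $ a - proj Cs k (mu \<omega>) $ a\<bar>" for \<omega>
    have gD: "g \<omega> \<le> D" for \<omega> unfolding g_def by (rule projD)
    have gS: "AE \<omega> in M. g \<omega> \<le> D * indicator S \<omega>"
      using AEL AE_space
    proof eventually_elim
      case (elim \<omega>)
      show ?case
      proof (cases "proj Cs k (muhat \<omega>) = proj Cs k (mu \<omega>)")
        case True then show ?thesis unfolding g_def using Dpos by simp
      next
        case False
        then have "mu \<omega> \<in> margin_nbhd Cs k (2 * dist (mu \<omega>) (muhat \<omega>))"
          using in_margin[OF assms(3)] by metis
        moreover have "dist (mu \<omega>) (muhat \<omega>) \<le> (\<Sum>a'\<in>UNIV. L a')"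
        proof -
          have "dist (mu \<omega>) (muhat \<omega>) = norm (muhat \<omega> - mu \<omega>)" by (simp add: dist_norm norm_minus_commute)
          also have "\<dots> \<le> (\<Sum>a'\<in>UNIV. \<bar>(muhat \<omega> - mu \<omega>) $ a'\<bar>)" by (rule norm_le_l1_cart)
          also have "\<dots> \<le> (\<Sum>a'\<in>UNIV. L a')" using elim by (intro sum_mono) auto
          finally show ?thesis .
        qed
        ultimately have "mu \<omega> \<in> margin_nbhd Cs k T"
          using margin_mono[of "2 * dist (mu \<omega>) (muhat \<omega>)" T Cs k] unfolding T_def by auto
        then show ?thesis using gD[of \<omega>] elim unfolding S_def
          by (cases "\<omega> \<in> space M") auto
      qed
    qed
    have main: "integral\<^sup>L M g \<le> K * (\<Sum>a'\<in>UNIV. L a' powr \<alpha>)"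
    proof (cases "integrable M g")
      case False
      then show ?thesis using Kpos SLa by (simp add: not_integrable_integral_eq)
    next
      case True
      show ?thesis
      proof (cases "T \<le> \<kappa>")
        case True
        have "integral\<^sup>L M g \<le> integral\<^sup>L M (\<lambda>\<omega>. D * indicator S \<omega>)"
          using \<open>integrable M g\<close> Sm gS by (intro integral_mono_AE) (auto intro!: integrable_real_indicator simp: less_top[symmetric])
        also have "\<dots> = D * measure M S" using Sm by simp
        also have "\<dots> \<le> D * (c0 * T powr \<alpha>)"
          using c0[OF Tpos True] Dpos unfolding S_def by (intro mult_left_mono) auto
        also have "T powr \<alpha> \<le> (2 * P * Mx) powr \<alpha>"
          using Tpos sumL assms(6) unfolding T_def by (intro powr_mono2) auto
        also have "\<dots> = (2 * P) powr \<alpha> * Mx powr \<alpha>"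
          using Ppos Mxpos by (simp add: powr_mult)
        also have "\<dots> \<le> (2 * P) powr \<alpha> * (\<Sum>a'\<in>UNIV. L a' powr \<alpha>)"
          using MxSL by (intro mult_left_mono) auto
        finally have "integral\<^sup>L M g \<le> D * (c0 * ((2 * P) powr \<alpha> * (\<Sum>a'\<in>UNIV. L a' powr \<alpha>)))"
          using Dpos c0pos by (simp add: mult_left_mono)
        also have "\<dots> \<le> K * (\<Sum>a'\<in>UNIV. L a' powr \<alpha>)"
          unfolding K_def using Dpos SLa by (simp add: algebra_simps mult_nonneg_nonneg)
        finally show ?thesis .
      next
        case False
        have "integral\<^sup>L M g \<le> integral\<^sup>L M (\<lambda>\<omega>. D)"
          using \<open>integrable M g\<close> gD by (intro integral_mono) auto
        also have "\<dots> = D" by (simp add: prob_space)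
        also have "1 \<le> (2 * P * Mx / \<kappa>) powr \<alpha>"
          using False sumL assms(5,6) unfolding T_def
          by (intro ge_one_powr_ge_zero) (auto simp: field_simps)
        then have "D \<le> D * (2 * P * Mx / \<kappa>) powr \<alpha>"
          using Dpos by (simp add: mult_le_cancel_left1)
        also have "(2 * P * Mx / \<kappa>) powr \<alpha> = (2 * P / \<kappa>) powr \<alpha> * Mx powr \<alpha>"
          using Ppos Mxpos assms(5) by (simp add: powr_mult[symmetric])
        also have "D * \<dots> \<le> D * ((2 * P / \<kappa>) powr \<alpha> * (\<Sum>a'\<in>UNIV. L a' powr \<alpha>))"
          using MxSL Dpos by (intro mult_left_mono) auto
        also have "\<dots> \<le> K * (\<Sum>a'\<in>UNIV. L a' powr \<alpha>)"
          unfolding K_def using Dpos SLa c0pos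
          by (simp add: algebra_simps mult_nonneg_nonneg)
        finally show ?thesis by simp
      qed
    qed
    have Xpos: "0 \<le> Max ((\<lambda>j. Linf M (\<lambda>\<omega>. of_bool (0 < zeta Cs k j (muhat \<omega>))
                                    - of_bool (0 < zeta Cs k j (mu \<omega>)))) ` {..<k})"
    proof -
      have "0 \<le> Linf M (\<lambda>\<omega>. of_bool (0 < zeta Cs k 0 (muhat \<omega>)) - of_bool (0 < zeta Cs k 0 (mu \<omega>)))"
        by (rule Linf_nonneg[OF assms(1)])
      also have "\<dots> \<le> Max ((\<lambda>j. Linf M (\<lambda>\<omega>. of_bool (0 < zeta Cs k j (muhat \<omega>))
                                    - of_bool (0 < zeta Cs k j (mu \<omega>)))) ` {..<k})"
        using assms(3) by (intro Max_ge) auto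
      finally show ?thesis .
    qed
    have Ypos: "0 \<le> (\<Sum>a'\<in>UNIV. L1 M (\<lambda>\<omega>. muhat \<omega> $ a' - mu \<omega> $ a'))"
      unfolding L1_def by (intro sum_nonneg integral_nonneg) auto
    show "integral\<^sup>L M (\<lambda>\<omega>. \<bar>proj Cs k (muhat \<omega>) $ a - proj Cs k (mu \<omega>) $ a\<bar>)
        \<le> K * (Max ((\<lambda>j. Linf M (\<lambda>\<omega>. of_bool (0 < zeta Cs k j (muhat \<omega>))
                                    - of_bool (0 < zeta Cs k j (mu \<omega>)))) ` {..<k})
               * (\<Sum>a'\<in>UNIV. L1 M (\<lambda>\<omega>. muhat \<omega> $ a' - mu \<omega> $ a'))
             + (\<Sum>a'\<in>UNIV. (Linf M (\<lambda>\<omega>. muhat \<omega> $ a' - mu \<omega> $ a')) powr \<alpha>))"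
      using main Kpos Xpos Ypos unfolding g_def L_def
      by (smt (verit) mult_nonneg_nonneg distrib_left)
  qed
qed

end
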